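(* Let $T$ be a random draft tree generated by Greedy sampling with root $r$, and let $\tilde p_r\in[0,1]$. Let $N_{\rm Mod}(T)$ be the acceptance length of modified UniVer (UniVer with the root's initial prefix acceptance probability set to $\tilde p_r$ instead of $1$) and $N_{\rm Greedy}(T)$ that of the Greedy method (both defined in the context). Then $$\mathbb{E}_T[N_{\rm Mod}(T)]\ \ge\ \tilde p_r\cdot\mathbb{E}_T[N_{\rm Greedy}(T)],$$ where the expectations are over the draft tree and the internal randomness of the procedures.
   Context: Let $\Sigma$ be a finite vocabulary; $\mathcal{M}_b(\cdot\mid x)$ (target) and $\mathcal{M}_s(\cdot\mid x)$ (draft) are conditional distributions on $\Sigma$ for every context $x$. $[x]_+=\max\{x,0\}$. Draft tree: fixed rooted topology (root $r$ at depth $0$, representing the current context); each non-root node carries a token and is identified with the token sequence on the path from $r$; $\mathcal{M}_b(\cdot\mid v),\mathcal{M}_s(\cdot\mid v)$ condition on that sequence. Greedy sampling, top-down: a non-leaf $v$ with $m$ children has children $\mathcal{C}(v)=\{u_1,\dots,u_m\}$, where $u_1,\dots,u_{m-1}$ are the $m-1$ most probable tokens under $\mathcal{M}_s(\cdot\mid v)$ (set $H_v$, ties broken by a fixed rule) and $u_m\sim\mathcal{M}_s^\neg(\cdot\mid v)$, with $\mathcal{M}_s^\neg(x\mid v)=\mathcal{M}_s(x\mid v)/\sum_{y\notin H_v}\mathcal{M}_s(y\mid v)$ for $x\notin H_v$ and $0$ for $x\in H_v$. For $\tilde p\in[0,1]$ and non-leaf $v$: $Z_v(\tilde p)=1-\tilde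 p+\sum_{x\in\Sigma}[\tilde p\mathcal{M}_b(x\mid v)-\mathcal{M}_s^\neg(x\mid v)]_+$, $p_v^{\tilde p}(u_m)=\min\{1,\tilde p\mathcal{M}_b(u_m\mid v)/\mathcal{M}_s^\neg(u_m\mid v)\}$, for $u\in\Sigma\setminus\{u_m\}$, $p_v^{\tilde p}(u)=[\tilde p\mathcal{M}_b(u\mid v)-\mathcal{M}_s^\neg(u\mid v)]_+(1-p_v^{\tilde p}(u_m))/Z_v(\tilde p)$, and $p_v^{\tilde p}(\neg v)=1-\sum_{u\in\Sigma}p_v^{\tilde p}(u)$. Modified UniVer: Allocation Phase starts from the given $\tilde p_r$ and, top-down, sets $p_v(\cdot)=p_v^{\tilde p_v}(\cdot)$, $\tilde p_{u_j}=p_v(u_j)/(1-\sum_{i<j}p_v(u_i))$ ($j=1,\dots,m$), $\tilde p_v^{\rm res}=1-p_v(\neg v)/(1-\sum_{i=1}^m p_v(u_i))$. Decision Phase: independent $\eta_v\sim U(0,1)$; visit nodes in post-order (recursively the subtrees of $u_1,\dots,u_m$ in order, then the node); stop at the first leaf $v$ with $\eta_v<\tilde p_v$ or non-leaf $v$ with $\eta_v<\tilde p_v^{\rm res}$. $N_{\rm Mod}(T)$ is the depth of the node at which it stops, and $0$ if every node is rejected. Greedy method: start at $c=r$. If $c$ is a leaf, stop. Otherwise sample one token $y\in\Sigma$ with probability $p_c^{1}(y)$ (the formulas above with $\tilde p=1$); if $y\in\mathcal{C}(c)$, set $c=y$ and repeat; otherwise stop. $N_{\rm Greedy}(T)$ is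 the depth of the node at which it stops. *)

theory Defs
  imports "HOL-Probability.Probability"
begin

text \<open>Fixed rooted topology: a node is given by the (ordered) list of its children.\<close>
datatype shape = Sh "shape list"

text \<open>Sampled draft tree: each child carries its token; the node's token sequence is
  the list of tokens along the path from the root (the root is the empty sequence).\<close>
datatype 'a dtree = DT "('a \<times> 'a dtree) list"

text \<open>Every node of the topology has at most as many children as there are tokens
  (needed so that the m-1 most probable tokens exist and u_m can be drawn outside them).\<close>
fun shape_ok :: "nat \<Rightarrow> shape \<Rightarrow> bool" where
  "shape_ok n (Sh cs) = (length cs \<le> n \<and> (\<forall>c\<in>set cs. shape_ok n c))"

text \<open>The residual draft distribution M_s^neg(. | v) outside the set H.
  Convention if the draft mass outside H is 0: uniform on the complement of H.\<close>
definition msneg :: "('a::finite list \<Rightarrow> 'a pmf) \<Rightarrow> 'a list \<Rightarrow> 'a set \<Rightarrow> 'a \<Rightarrow> real" where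
  "msneg Ms v H x =
     (if x \<in> H then 0
      else (let s = (\<Sum>y\<in>-H. pmf (Ms v) y)
            in if s > 0 then pmf (Ms v) x / s else 1 / real (card (- H))))"

definition msneg_pmf :: "('a::finite list \<Rightarrow> 'a pmf) \<Rightarrow> 'a list \<Rightarrow> 'a set \<Rightarrow> 'a pmf" where
  "msneg_pmf Ms v H = embed_pmf (msneg Ms v H)"

definition Zv :: "('a::finite list \<Rightarrow> 'a pmf) \<Rightarrow> ('a list \<Rightarrow> 'a pmf) \<Rightarrow> 'a list \<Rightarrow> 'a set \<Rightarrow> real \<Rightarrow> real" where
  "Zv Mb Ms v H pt = 1 - pt + (\<Sum>x\<in>UNIV. max 0 (pt * pmf (Mb v) x - msneg Ms v H x))"

text \<open>p_v^pt(u), where um is the sampled last child u_m and H = H_v.\<close>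
definition pv :: "('a::finite list \<Rightarrow> 'a pmf) \<Rightarrow> ('a list \<Rightarrow> 'a pmf) \<Rightarrow> 'a list \<Rightarrow> 'a set \<Rightarrow> 'a
                  \<Rightarrow> real \<Rightarrow> 'a \<Rightarrow> real" where
  "pv Mb Ms v H um pt u =
     (let a = min 1 (pt * pmf (Mb v) um / msneg Ms v H um)
      in if u = um then a
         else max 0 (pt * pmf (Mb v) u - msneg Ms v H u) * (1 - a) / Zv Mb Ms v H pt)"

primrec seq_pmf :: "'b pmf list \<Rightarrow> 'b list pmf" where
  "seq_pmf [] = return_pmf []"
| "seq_pmf (p # ps) = bind_pmf p (\<lambda>x. map_pmf (\<lambda>xs. x # xs) (seq_pmf ps))"

text \<open>topk v k: the k most probable tokens under M_s(. | v), in order of decreasing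
  probability, ties broken by a fixed rule (a parameter of the theorem).\<close>
function sample_tree :: "('a::finite list \<Rightarrow> 'a pmf) \<Rightarrow> ('a list \<Rightarrow> nat \<Rightarrow> 'a list)
                          \<Rightarrow> 'a list \<Rightarrow> shape \<Rightarrow> 'a dtree pmf" where
  "sample_tree Ms topk v (Sh cs) =
     (if cs = [] then return_pmf (DT [])
      else (let hs = topk v (length cs - 1) in
            bind_pmf (msneg_pmf Ms v (set hs)) (\<lambda>um.
              let us = hs @ [um] in
              map_pmf (\<lambda>ts. DT (zip us ts))
                (seq_pmf (map (\<lambda>j. sample_tree Ms topk (v @ [us ! j]) (cs ! j)) [0..<length cs])))))"
  by pat_completeness auto
termination
  by (relation "Wellfounded.measure (\<lambda>(_, _, _, s). size s)")
     (auto intro: le_imp_less_Suc nth_mem size_list_estimation' order_refl)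

lemma pair_size_lt: "(x, t) \<in> set cs \<Longrightarrow> (g::'b \<Rightarrow> nat) t < Suc (size_list (size_prod (\<lambda>_. 0) g) cs)"
proof -
  assume "(x, t) \<in> set cs"
  then have "size_prod (\<lambda>_. 0) g (x, t) \<le> size_list (size_prod (\<lambda>_. 0) g) cs"
    by (rule size_list_estimation') simp
  then show ?thesis by simp
qed

text \<open>Post-order search: return the first accepted result among the children's subtrees,
  otherwise the node's own test.\<close>
primrec first_some :: "'b option pmf list \<Rightarrow> 'b option pmf \<Rightarrow> 'b option pmf" where
  "first_some [] q = q"
| "first_some (x # xs) q =
     bind_pmf x (\<lambda>r. case r of Some y \<Rightarrow> return_pmf (Some y) | None \<Rightarrow> first_some xs q)"

text \<open>Acceptance test eta_v < p with eta_v ~ U(0,1) independent: Bernoulli(p) (clamped).\<close>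
definition accept_test :: "real \<Rightarrow> nat \<Rightarrow> nat option pmf" where
  "accept_test p d = map_pmf (\<lambda>b. if b then Some d else None) (bernoulli_pmf p)"

text \<open>univer_dec Mb Ms pt v d T: allocation (starting from pt at the node with token
  sequence v at depth d) followed by the decision phase on the subtree T; returns the
  depth of the stopping node, or None if every node is rejected.\<close>
function univer_dec :: "('a::finite list \<Rightarrow> 'a pmf) \<Rightarrow> ('a list \<Rightarrow> 'a pmf) \<Rightarrow> real
                          \<Rightarrow> 'a list \<Rightarrow> nat \<Rightarrow> 'a dtree \<Rightarrow> nat option pmf" where
  "univer_dec Mb Ms pt v d (DT cs) =
     (if cs = [] then accept_test pt d
      else (let us = map fst cs; m = length cs; H = set (butlast us); um = last us;
                p = pv Mb Ms v H um pt;
                pchild = (\<lambda>j. p (us ! j) / (1 - (\<Sum>i<j. p (us ! i))));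
                pnot = 1 - (\<Sum>u\<in>UNIV. p u);
                pres = 1 - pnot / (1 - (\<Sum>i<m. p (us ! i)))
            in first_some
                 (map (\<lambda>j. univer_dec Mb Ms (pchild j) (v @ [us ! j]) (Suc d) (snd (cs ! j))) [0..<m])
                 (accept_test pres d)))"
  by pat_completeness auto
termination
  by (relation "Wellfounded.measure (\<lambda>(_, _, _, _, _, t). size t)")
     (auto intro!: pair_size_lt[of "fst (cs ! j)" "snd (cs ! j)" for cs j] nth_mem)

definition N_Mod :: "('a::finite list \<Rightarrow> 'a pmf) \<Rightarrow> ('a list \<Rightarrow> 'a pmf) \<Rightarrow> real
                      \<Rightarrow> 'a dtree \<Rightarrow> nat pmf" where
  "N_Mod Mb Ms pr T = map_pmf (\<lambda>r. case r of None \<Rightarrow> 0 | Some d \<Rightarrow> d) (univer_dec Mb Ms pr [] 0 T)"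

text \<open>Distribution on tokens plus the extra outcome "not v" (None), with weights w;
  valid whenever the weights are nonnegative with total at most 1 (otherwise junk).\<close>
definition token_or_stop_pmf :: "('a::finite \<Rightarrow> real) \<Rightarrow> 'a option pmf" where
  "token_or_stop_pmf w =
     embed_pmf (\<lambda>z. if (\<forall>x. 0 \<le> w x) \<and> (\<Sum>x\<in>UNIV. w x) \<le> 1
                    then (case z of None \<Rightarrow> 1 - (\<Sum>x\<in>UNIV. w x) | Some x \<Rightarrow> w x)
                    else (case z of None \<Rightarrow> 1 | Some _ \<Rightarrow> 0))"

function greedy :: "('a::finite list \<Rightarrow> 'a pmf) \<Rightarrow> ('a list \<Rightarrow> 'a pmf)
                     \<Rightarrow> 'a list \<Rightarrow> nat \<Rightarrow> 'a dtree \<Rightarrow> nat pmf" where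
  "greedy Mb Ms v d (DT cs) =
     (if cs = [] then return_pmf d
      else (let us = map fst cs; H = set (butlast us); um = last us in
            bind_pmf (token_or_stop_pmf (pv Mb Ms v H um 1)) (\<lambda>y.
              case y of None \<Rightarrow> return_pmf d
              | Some x \<Rightarrow> (case map_of cs x of None \<Rightarrow> return_pmf d
                          | Some t \<Rightarrow> greedy Mb Ms (v @ [x]) (Suc d) t))))"
  by pat_completeness auto
termination
  by (relation "Wellfounded.measure (\<lambda>(_, _, _, _, t). size t)")
     (auto intro: pair_size_lt map_of_SomeD)

definition N_Greedy :: "('a::finite list \<Rightarrow> 'a pmf) \<Rightarrow> ('a list \<Rightarrow> 'a pmf) \<Rightarrow> 'a dtree \<Rightarrow> nat pmf" where
  "N_Greedy Mb Ms T = greedy Mb Ms [] 0 T"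

end

theory Submission
  imports Defs
begin


lemma nn_fin: "(\<integral>\<^sup>+x. f x \<partial>measure_pmf (p::'a::finite pmf)) = (\<Sum>x\<in>UNIV. f x * pmf p x)"
  by (rule nn_integral_measure_pmf_support) auto

lemma nn_first_some_Cons:
  "(\<integral>\<^sup>+r. f r \<partial>measure_pmf (first_some (x#xs) q)) =
   (\<integral>\<^sup>+r. (case r of None \<Rightarrow> 0 | Some y \<Rightarrow> f (Some y)) \<partial>measure_pmf x)
   + ennreal (pmf x None) * (\<integral>\<^sup>+r. f r \<partial>measure_pmf (first_some xs q))"
proof -
  let ?I = "\<integral>\<^sup>+r. f r \<partial>measure_pmf (first_some xs q)"
  have "(\<integral>\<^sup>+r. f r \<partial>measure_pmf (first_some (x#xs) q)) =
     (\<integral>\<^sup>+r. ((case r of None \<Rightarrow> 0 | Some y \<Rightarrow> f (Some y)) + ?I * indicator {None} r) \<partial>measure_pmf x)"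
    by (auto intro!: nn_integral_cong split: option.split)
  also have "\<dots> = (\<integral>\<^sup>+r. (case r of None \<Rightarrow> 0 | Some y \<Rightarrow> f (Some y)) \<partial>measure_pmf x)
     + (\<integral>\<^sup>+r. ?I * indicator {None} r \<partial>measure_pmf x)"
    by (rule nn_integral_add) auto
  also have "(\<integral>\<^sup>+r. ?I * indicator {None} r \<partial>measure_pmf x) = ?I * ennreal (pmf x None)"
    by (simp add: emeasure_pmf_single)
  finally show ?thesis by (simp add: mult.commute)
qed

lemma nn_first_some:
  "(\<integral>\<^sup>+r. f r \<partial>measure_pmf (first_some xs q)) =
   (\<Sum>j<length xs. ennreal (\<Prod>i<j. pmf (xs!i) None) *
        (\<integral>\<^sup>+r. (case r of None \<Rightarrow> 0 | Some y \<Rightarrow> f (Some y)) \<partial>measure_pmf (xs!j)))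
   + ennreal (\<Prod>i<length xs. pmf (xs!i) None) * (\<integral>\<^sup>+r. f r \<partial>measure_pmf q)"
proof (induction xs)
  case Nil
  then show ?case by simp
next
  case (Cons x xs)
  show ?case
    unfolding nn_first_some_Cons Cons.IH
    by (simp add: sum.lessThan_Suc_shift prod.lessThan_Suc_shift distrib_left sum_distrib_left
        ennreal_mult' prod_nonneg pmf_nonneg mult.assoc add.assoc del: sum.lessThan_Suc prod.lessThan_Suc)
qed

lemma pmf_first_some:
  "pmf (first_some xs q) None = (\<Prod>i<length xs. pmf (xs!i) None) * pmf q None"
proof -
  have z: "case_option (0::ennreal) (\<lambda>y. 0) = (\<lambda>_. 0)" by (rule ext) (simp split: option.split)
  have "ennreal (pmf (first_some xs q) None) = (\<integral>\<^sup>+r. indicator {None} r \<partial>measure_pmf (first_some xs q))"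
    by (simp add: emeasure_pmf_single)
  also have "\<dots> = ennreal (\<Prod>i<length xs. pmf (xs!i) None) * ennreal (pmf q None)"
    by (subst nn_first_some) (simp add: emeasure_pmf_single z)
  finally show ?thesis
    by (simp add: ennreal_mult'[symmetric] prod_nonneg pmf_nonneg)
qed

lemma seq_length: "ts \<in> set_pmf (seq_pmf ps) \<Longrightarrow> length ts = length ps"
  by (induction ps arbitrary: ts) auto

lemma seq_nth: "j < length ps \<Longrightarrow> map_pmf (\<lambda>ts. ts!j) (seq_pmf ps) = ps ! j"
proof (induction ps arbitrary: j)
  case Nil then show ?case by simp
next
  case (Cons p ps)
  show ?case
  proof (cases j)
    case 0 then show ?thesis by (simp add: map_bind_pmf pmf.map_comp o_def bind_return_pmf')
  next
    case (Suc k) then show ?thesis using Cons by (simp add: map_bind_pmf pmf.map_comp o_def)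
  qed
qed

lemma seq_first_some:
  "bind_pmf (seq_pmf ps) (\<lambda>ts. first_some (map (\<lambda>j. F j (ts!j)) [0..<length ps]) q) =
   first_some (map (\<lambda>j. bind_pmf (ps!j) (F j)) [0..<length ps]) q"
proof (induction ps arbitrary: F)
  case Nil then show ?case by simp
next
  case (Cons p ps)
  have "bind_pmf (seq_pmf (p#ps)) (\<lambda>ts. first_some (map (\<lambda>j. F j (ts!j)) [0..<length (p#ps)]) q)
     = bind_pmf p (\<lambda>x. bind_pmf (seq_pmf ps) (\<lambda>ts. bind_pmf (F 0 x) (\<lambda>r. case r of Some y \<Rightarrow> return_pmf (Some y)
         | None \<Rightarrow> first_some (map (\<lambda>j. F (Suc j) (ts!j)) [0..<length ps]) q)))"
    by (simp add: map_upt_Suc bind_map_pmf o_def bind_assoc_pmf del: upt_Suc)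
  also have "\<dots> = bind_pmf p (\<lambda>x. bind_pmf (F 0 x) (\<lambda>r. bind_pmf (seq_pmf ps) (\<lambda>ts. case r of Some y \<Rightarrow> return_pmf (Some y)
         | None \<Rightarrow> first_some (map (\<lambda>j. F (Suc j) (ts!j)) [0..<length ps]) q)))"
    by (subst bind_commute_pmf) rule
  also have "\<dots> = bind_pmf p (\<lambda>x. bind_pmf (F 0 x) (\<lambda>r. case r of Some y \<Rightarrow> return_pmf (Some y)
         | None \<Rightarrow> first_some (map (\<lambda>j. bind_pmf (ps!j) (F (Suc j))) [0..<length ps]) q))"
    by (intro bind_pmf_cong refl) (auto split: option.split simp: Cons.IH[of "\<lambda>j. F (Suc j)"])
  also have "\<dots> = first_some (map (\<lambda>j. bind_pmf ((p#ps)!j) (F j)) [0..<length (p#ps)]) q"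
    by (simp add: map_upt_Suc bind_assoc_pmf del: upt_Suc)
  finally show ?case .
qed




lemma h1: "(m::real)*(A + x*(1-A)/z) = m*A + m*(x/z) - m*A*(x/z)"
proof -
  have "x*(1-A)/z = (x/z)*(1-A)" by simp
  then show ?thesis by (simp only:) (simp only: algebra_simps)
qed

lemma h2: "(m::real) * (max 0 (c - 0) * (1 - A) / z) = (m - m * A) * (c / z)" if "c \<ge> 0"
proof -
  have "max 0 (c - 0) * (1 - A) / z = (c/z)*(1-A)" using that by simp
  then show ?thesis by (simp only:) (simp only: algebra_simps)
qed

context
  fixes Mb Ms :: "'a::finite list \<Rightarrow> 'a pmf" and v :: "'a list" and H :: "'a set"
  assumes HU: "H \<noteq> UNIV"
begin

lemma mn_nonneg: "0 \<le> msneg Ms v H x"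
  unfolding msneg_def Let_def by (auto intro!: divide_nonneg_pos)

lemma mn_H: "x \<in> H \<Longrightarrow> msneg Ms v H x = 0"
  unfolding msneg_def by simp

lemma mn_sum: "(\<Sum>x\<in>UNIV. msneg Ms v H x) = 1"
proof -
  have "(\<Sum>x\<in>UNIV. msneg Ms v H x) = (\<Sum>x\<in>-H. msneg Ms v H x)"
    by (rule sum.mono_neutral_right) (auto simp: mn_H)
  also have "\<dots> = 1"
  proof (cases "(\<Sum>y\<in>-H. pmf (Ms v) y) > 0")
    case True
    then have "(\<Sum>x\<in>-H. msneg Ms v H x) = (\<Sum>x\<in>-H. pmf (Ms v) x / (\<Sum>y\<in>-H. pmf (Ms v) y))"
      by (intro sum.cong) (auto simp: msneg_def)
    also have "\<dots> = 1" using True by (simp add: sum_divide_distrib[symmetric])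
    finally show ?thesis .
  next
    case False
    have ne: "-H \<noteq> {}" using HU by auto
    then have c: "card (-H) > 0" by (metis card_gt_0_iff finite)
    have "(\<Sum>x\<in>-H. msneg Ms v H x) = (\<Sum>x\<in>-H. 1 / real (card (-H)))"
      using False by (intro sum.cong) (auto simp: msneg_def)
    also have "\<dots> = 1" using ne by simp
    finally show ?thesis .
  qed
  finally show ?thesis .
qed

lemma pmf_mn: "pmf (msneg_pmf Ms v H) x = msneg Ms v H x"
  unfolding msneg_pmf_def
proof (rule pmf_embed_pmf)
  show "\<And>x. 0 \<le> msneg Ms v H x" by (rule mn_nonneg)
  have "(\<integral>\<^sup>+ x. ennreal (msneg Ms v H x) \<partial>count_space UNIV) = (\<Sum>x\<in>UNIV. ennreal (msneg Ms v H x))"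
    by (simp add: nn_integral_count_space_finite)
  also have "\<dots> = ennreal (\<Sum>x\<in>UNIV. msneg Ms v H x)"
    by (rule sum_ennreal) (rule mn_nonneg)
  finally show "(\<integral>\<^sup>+ x. ennreal (msneg Ms v H x) \<partial>count_space UNIV) = 1" by (simp add: mn_sum)
qed

lemma set_mn: "um \<in> set_pmf (msneg_pmf Ms v H) \<Longrightarrow> msneg Ms v H um > 0"
  using mn_nonneg[of um] by (auto simp: set_pmf_iff pmf_mn)

lemma set_mn_H: "um \<in> set_pmf (msneg_pmf Ms v H) \<Longrightarrow> um \<notin> H"
  using set_mn mn_H by fastforce

definition "SS p = (\<Sum>x\<in>UNIV. max 0 (p * pmf (Mb v) x - msneg Ms v H x))"
definition "AA p um = min 1 (p * pmf (Mb v) um / msneg Ms v H um)"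

lemma SS_nonneg: "0 \<le> SS p" unfolding SS_def by (auto intro: sum_nonneg)

lemma Zv_eq: "Zv Mb Ms v H p = 1 - p + SS p" unfolding Zv_def SS_def by simp

lemma AA_range: "0 \<le> p \<Longrightarrow> 0 \<le> AA p um \<and> AA p um \<le> 1"
  unfolding AA_def using mn_nonneg[of um] by auto

lemma pv_eq: "pv Mb Ms v H um p u = (if u = um then AA p um
   else max 0 (p * pmf (Mb v) u - msneg Ms v H u) * (1 - AA p um) / (1 - p + SS p))"
  unfolding pv_def AA_def Let_def Zv_eq by simp

lemma pv_nonneg: "0 \<le> p \<Longrightarrow> p \<le> 1 \<Longrightarrow> 0 \<le> pv Mb Ms v H um p u"
  using AA_range[of p um] SS_nonneg[of p] by (auto simp: pv_eq)

lemma pv_sum: assumes p: "0 \<le> p" "p \<le> 1" and m: "msneg Ms v H um > 0"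
  shows "(\<Sum>u\<in>UNIV. pv Mb Ms v H um p u) = AA p um + SS p * (1 - AA p um) / (1 - p + SS p)"
proof -
  let ?f = "\<lambda>u. max 0 (p * pmf (Mb v) u - msneg Ms v H u)"
  have "(\<Sum>u\<in>UNIV. pv Mb Ms v H um p u) = pv Mb Ms v H um p um + (\<Sum>u\<in>UNIV-{um}. pv Mb Ms v H um p u)"
    by (simp add: sum.remove)
  also have "(\<Sum>u\<in>UNIV-{um}. pv Mb Ms v H um p u) = (\<Sum>u\<in>UNIV-{um}. ?f u) * (1 - AA p um) / (1 - p + SS p)"
    by (simp add: pv_eq sum_divide_distrib sum_distrib_right)
  also have "(\<Sum>u\<in>UNIV-{um}. ?f u) * (1 - AA p um) = SS p * (1 - AA p um)"
  proof (cases "AA p um < 1")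
    case True
    then have "p * pmf (Mb v) um / msneg Ms v H um < 1" unfolding AA_def by simp
    then have "p * pmf (Mb v) um < msneg Ms v H um" using m by (simp add: divide_less_eq)
    then have "?f um = 0" by simp
    then have "SS p = (\<Sum>u\<in>UNIV-{um}. ?f u)" unfolding SS_def using sum.remove[of UNIV um ?f] by simp
    then show ?thesis by simp
  next
    case False
    then have "AA p um = 1" using AA_range[of p um] p by simp
    then show ?thesis by simp
  qed
  finally show ?thesis by (simp add: pv_eq)
qed

lemma pv_sum_le: assumes p: "0 \<le> p" "p \<le> 1" and m: "msneg Ms v H um > 0"
  shows "(\<Sum>u\<in>UNIV. pv Mb Ms v H um p u) \<le> 1"
proof -
  have A: "0 \<le> AA p um" "AA p um \<le> 1" using AA_range[of p um] p by auto
  have S: "0 \<le> SS p" by (rule SS_nonneg)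
  have "SS p / (1 - p + SS p) \<le> 1"
    using S p by (cases "1 - p + SS p = 0") (auto simp: divide_le_eq)
  then have "SS p * (1 - AA p um) / (1 - p + SS p) \<le> 1 - AA p um"
    using A by (metis mult.commute mult_le_cancel_left1 times_divide_eq_right diff_ge_0_iff_ge
        mult_right_mono mult_1 )
  then show ?thesis using pv_sum[OF p m] by simp
qed

lemma sum_mn_AA: assumes p: "0 \<le> p"
  shows "(\<Sum>um\<in>UNIV. msneg Ms v H um * AA p um) = p - SS p"
proof -
  have "(\<Sum>um\<in>UNIV. msneg Ms v H um * AA p um) = (\<Sum>um\<in>UNIV. min (msneg Ms v H um) (p * pmf (Mb v) um))"
  proof (intro sum.cong refl)
    fix um
    show "msneg Ms v H um * AA p um = min (msneg Ms v H um) (p * pmf (Mb v) um)"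
    proof (cases "msneg Ms v H um > 0")
      case True
      then show ?thesis unfolding AA_def
        by (simp add: min_mult_distrib_left)
    next
      case False
      then have "msneg Ms v H um = 0" using mn_nonneg[of um] by simp
      then show ?thesis using p by (simp add: min_def)
    qed
  qed
  also have "\<dots> = (\<Sum>um\<in>UNIV. p * pmf (Mb v) um - max 0 (p * pmf (Mb v) um - msneg Ms v H um))"
    by (intro sum.cong refl) (simp add: min_def max_def)
  also have "\<dots> = p * (\<Sum>um\<in>UNIV. pmf (Mb v) um) - SS p"
    unfolding SS_def by (simp add: sum_subtractf sum_distrib_left)
  also have "(\<Sum>um\<in>UNIV. pmf (Mb v) um) = 1" by (rule sum_pmf_eq_1) auto
  finally show ?thesis by simp
qed

lemma pv_avg: assumes p: "0 \<le> p" "p \<le> 1"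
  shows "(\<Sum>um\<in>UNIV. msneg Ms v H um * (\<Sum>u\<in>UNIV. pv Mb Ms v H um p u)) = p"
proof -
  let ?Z = "1 - p + SS p"
  have "(\<Sum>um\<in>UNIV. msneg Ms v H um * (\<Sum>u\<in>UNIV. pv Mb Ms v H um p u))
      = (\<Sum>um\<in>UNIV. msneg Ms v H um * AA p um + msneg Ms v H um * (SS p / ?Z) - (msneg Ms v H um * AA p um) * (SS p / ?Z))"
  proof (intro sum.cong refl)
    fix um
    show "msneg Ms v H um * (\<Sum>u\<in>UNIV. pv Mb Ms v H um p u) = msneg Ms v H um * AA p um + msneg Ms v H um * (SS p / ?Z) - (msneg Ms v H um * AA p um) * (SS p / ?Z)"
    proof (cases "msneg Ms v H um > 0")
      case True
      then show ?thesis using pv_sum[OF p True] h1 by simp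
    next
      case False
      then have "msneg Ms v H um = 0" using mn_nonneg[of um] by simp
      then show ?thesis by simp
    qed
  qed
  also have "\<dots> = (p - SS p) + SS p / ?Z - (p - SS p) * (SS p / ?Z)"
    by (simp add: sum.distrib sum_subtractf sum_divide_distrib[symmetric] sum_distrib_right[symmetric] sum_mn_AA p mn_sum)
  also have "\<dots> = p"
  proof (cases "?Z = 0")
    case True
    then have "SS p = 0" using SS_nonneg[of p] p by linarith
    then show ?thesis by simp
  next
    case False
    have e: "(p - SS p) + SS p / ?Z - (p - SS p) * (SS p / ?Z) = (p - SS p) + (SS p / ?Z) * ?Z"
      by (simp only: algebra_simps)
    have "(SS p / ?Z) * ?Z = SS p" using False by simp
    then show ?thesis unfolding e by simp
  qed
  finally show ?thesis .
qed

lemma pv_avgH: assumes p: "0 \<le> p" "p \<le> 1" and h: "h \<in> H"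
  shows "(\<Sum>um\<in>UNIV. msneg Ms v H um * pv Mb Ms v H um p h) = p * pmf (Mb v) h"
proof -
  let ?Z = "1 - p + SS p"
  have mh: "msneg Ms v H h = 0" using h by (rule mn_H)
  have "(\<Sum>um\<in>UNIV. msneg Ms v H um * pv Mb Ms v H um p h)
     = (\<Sum>um\<in>UNIV. (msneg Ms v H um - msneg Ms v H um * AA p um) * (p * pmf (Mb v) h / ?Z))"
  proof (intro sum.cong refl)
    fix um
    show "msneg Ms v H um * pv Mb Ms v H um p h = (msneg Ms v H um - msneg Ms v H um * AA p um) * (p * pmf (Mb v) h / ?Z)"
    proof (cases "msneg Ms v H um > 0")
      case True
      then have "h \<noteq> um" using mh by auto
      then show ?thesis using mh p h2[of "p * pmf (Mb v) h" "msneg Ms v H um" "AA p um" ?Z] by (simp add: pv_eq)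
    next
      case False
      then have "msneg Ms v H um = 0" using mn_nonneg[of um] by simp
      then show ?thesis by simp
    qed
  qed
  also have "\<dots> = (1 - (p - SS p)) * (p * pmf (Mb v) h / ?Z)"
    by (simp add: sum_divide_distrib[symmetric] sum_distrib_right[symmetric] sum_subtractf mn_sum sum_mn_AA p)
  also have "\<dots> = p * pmf (Mb v) h"
  proof (cases "?Z = 0")
    case True
    then have S0: "SS p = 0" using SS_nonneg[of p] p by linarith
    have "max 0 (p * pmf (Mb v) h - msneg Ms v H h) \<le> SS p"
      unfolding SS_def by (rule member_le_sum) auto
    then have "p * pmf (Mb v) h \<le> 0" using S0 mh by simp
    moreover have "0 \<le> p * pmf (Mb v) h" using p by simp
    ultimately have "p * pmf (Mb v) h = 0" by linarith
    then show ?thesis by (simp only: mult_zero_right div_0 mult_zero_left)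
  next
    case False
    then show ?thesis by (simp add: field_simps)
  qed
  finally show ?thesis .
qed

lemma pv_um: assumes p: "0 \<le> p" "p \<le> 1" and m: "msneg Ms v H um > 0"
  shows "p * pv Mb Ms v H um 1 um \<le> pv Mb Ms v H um p um"
proof -
  have "p * min 1 (pmf (Mb v) um / msneg Ms v H um) = min p (p * pmf (Mb v) um / msneg Ms v H um)"
    using p by (simp add: min_mult_distrib_left)
  also have "\<dots> \<le> min 1 (p * pmf (Mb v) um / msneg Ms v H um)" using p by auto
  finally show ?thesis by (simp add: pv_eq AA_def)
qed

end



lemma sum_idx_img: "distinct us \<Longrightarrow> j \<le> length us \<Longrightarrow>
   (\<Sum>i<j. P (us!i)) = sum P (nth us ` {..<j})"
  by (subst sum.reindex) (auto intro!: inj_on_nth)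

lemma sum_idx_le: "distinct us \<Longrightarrow> j \<le> length us \<Longrightarrow> (\<And>u. 0 \<le> P u) \<Longrightarrow>
   (\<Sum>i<j. P (us!i)) \<le> (\<Sum>u\<in>UNIV. ((P::'a::finite \<Rightarrow> real) u))"
  by (subst sum_idx_img) (auto intro!: sum_mono2)

lemma sum_idx_all: "distinct us \<Longrightarrow> (\<Sum>i<length us. P (us!i)) = sum P (set us)"
proof -
  assume "distinct us"
  moreover have "nth us ` {..<length us} = set us" by (auto simp: in_set_conv_nth)
  ultimately show ?thesis by (subst sum_idx_img) auto
qed

context
  fixes P :: "'a::finite \<Rightarrow> real" and us :: "'a list"
  assumes Pn: "\<And>u. 0 \<le> P u" and Ps: "(\<Sum>u\<in>UNIV. P u) \<le> 1" and dis: "distinct us"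
begin

lemma PP_le: "j \<le> length us \<Longrightarrow> (\<Sum>i<j. P (us!i)) \<le> 1"
  using sum_idx_le[of us j P, OF dis _ Pn] Ps by linarith

lemma PP_nonneg: "0 \<le> (\<Sum>i<j. P (us!i))"
  by (auto intro: sum_nonneg Pn)

lemma pch_range: "j < length us \<Longrightarrow> 0 \<le> P (us!j) / (1 - (\<Sum>i<j. P (us!i)))
   \<and> P (us!j) / (1 - (\<Sum>i<j. P (us!i))) \<le> 1"
proof -
  assume j: "j < length us"
  have "(\<Sum>i<Suc j. P (us!i)) \<le> 1" using PP_le[of "Suc j"] j by simp
  then have a: "P (us!j) \<le> 1 - (\<Sum>i<j. P (us!i))" by simp
  show ?thesis
  proof (cases "1 - (\<Sum>i<j. P (us!i)) = 0")
    case True then show ?thesis by simp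
  next
    case False
    then have "1 - (\<Sum>i<j. P (us!i)) > 0" using PP_le[of j] j by simp
    then show ?thesis using a Pn[of "us!j"] by (simp add: divide_le_eq)
  qed
qed

lemma pch_mult: "j < length us \<Longrightarrow> (1 - (\<Sum>i<j. P (us!i))) * (P (us!j) / (1 - (\<Sum>i<j. P (us!i)))) = P (us!j)"
proof -
  assume j: "j < length us"
  have "(\<Sum>i<Suc j. P (us!i)) \<le> 1" using PP_le[of "Suc j"] j by simp
  then have a: "P (us!j) \<le> 1 - (\<Sum>i<j. P (us!i))" by simp
  show ?thesis
  proof (cases "1 - (\<Sum>i<j. P (us!i)) = 0")
    case True then show ?thesis using a Pn[of "us!j"] by simp
  next
    case False then show ?thesis by simp
  qed
qed

lemma prod_pch: "j \<le> length us \<Longrightarrow> (\<Prod>i<j. 1 - P (us!i) / (1 - (\<Sum>k<i. P (us!k)))) = 1 - (\<Sum>i<j. P (us!i))"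
proof (induction j)
  case 0 then show ?case by simp
next
  case (Suc j)
  then have IH: "(\<Prod>i<j. 1 - P (us!i) / (1 - (\<Sum>k<i. P (us!k)))) = 1 - (\<Sum>i<j. P (us!i))" by simp
  have "(\<Prod>i<Suc j. 1 - P (us!i) / (1 - (\<Sum>k<i. P (us!k))))
     = (1 - (\<Sum>i<j. P (us!i))) - (1 - (\<Sum>i<j. P (us!i))) * (P (us!j) / (1 - (\<Sum>k<j. P (us!k))))"
    unfolding prod.lessThan_Suc IH by (simp only: right_diff_distrib mult_1_right)
  also have "\<dots> = 1 - (\<Sum>i<Suc j. P (us!i))" using pch_mult[of j] Suc.prems by simp
  finally show ?case .
qed

lemma pres_facts:
  defines "PM \<equiv> (\<Sum>i<length us. P (us!i))"
  defines "pr \<equiv> 1 - (1 - (\<Sum>u\<in>UNIV. P u)) / (1 - PM)"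
  shows "0 \<le> pr" "pr \<le> 1" "(1 - PM) * (1 - pr) = 1 - (\<Sum>u\<in>UNIV. P u)"
    "(1 - PM) * pr = (\<Sum>u\<in>UNIV. P u) - PM"
proof -
  have a: "PM \<le> (\<Sum>u\<in>UNIV. P u)" unfolding PM_def by (rule sum_idx_le[of us _ P, OF dis _ Pn]) simp
  have "(1 - PM) * (1 - pr) = 1 - (\<Sum>u\<in>UNIV. P u) \<and> 0 \<le> pr \<and> pr \<le> 1"
  proof (cases "1 - PM = 0")
    case True then show ?thesis using a Ps unfolding pr_def by simp
  next
    case False
    then have "1 - PM > 0" using a Ps by simp
    then show ?thesis using a Ps unfolding pr_def by (simp add: divide_le_eq)
  qed
  then show "0 \<le> pr" "pr \<le> 1" "(1 - PM) * (1 - pr) = 1 - (\<Sum>u\<in>UNIV. P u)" by auto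
  then show "(1 - PM) * pr = (\<Sum>u\<in>UNIV. P u) - PM" by (simp add: algebra_simps)
qed

end



definition Ub where "Ub Mb Ms topk p v d s = bind_pmf (sample_tree Ms topk v s) (univer_dec Mb Ms p v d)"
definition Gb where "Gb Mb Ms topk v d s = bind_pmf (sample_tree Ms topk v s) (greedy Mb Ms v d)"

lemma U_node:
  assumes cs: "cs \<noteq> []" and len: "length (topk v (length cs - 1)) = length cs - 1"
  shows "Ub Mb Ms topk p v d (Sh cs) = bind_pmf (msneg_pmf Ms v (set (topk v (length cs - 1)))) (\<lambda>um.
   first_some (map (\<lambda>j. Ub Mb Ms topk
       (pv Mb Ms v (set (topk v (length cs - 1))) um p ((topk v (length cs - 1) @ [um])!j) /
          (1 - (\<Sum>i<j. pv Mb Ms v (set (topk v (length cs - 1))) um p ((topk v (length cs - 1) @ [um])!i))))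
       (v @ [(topk v (length cs - 1) @ [um])!j]) (Suc d) (cs!j)) [0..<length cs])
     (accept_test (1 - (1 - (\<Sum>u\<in>UNIV. pv Mb Ms v (set (topk v (length cs - 1))) um p u)) /
        (1 - (\<Sum>i<length cs. pv Mb Ms v (set (topk v (length cs - 1))) um p ((topk v (length cs - 1) @ [um])!i)))) d))"
proof -
  define hs where "hs = topk v (length cs - 1)"
  define H where "H = set hs"
  have lus: "\<And>um. length (hs @ [um]) = length cs" using len cs unfolding hs_def by simp
  let ?P = "\<lambda>um. pv Mb Ms v H um p"
  let ?ps = "\<lambda>um. map (\<lambda>j. sample_tree Ms topk (v @ [(hs @ [um]) ! j]) (cs ! j)) [0..<length cs]"
  let ?F = "\<lambda>um j. univer_dec Mb Ms (?P um ((hs@[um])!j) / (1 - (\<Sum>i<j. ?P um ((hs@[um])!i)))) (v @ [(hs@[um])!j]) (Suc d)"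
  let ?q = "\<lambda>um. accept_test (1 - (1 - (\<Sum>u\<in>UNIV. ?P um u)) / (1 - (\<Sum>i<length cs. ?P um ((hs@[um])!i)))) d"
  have "Ub Mb Ms topk p v d (Sh cs) = bind_pmf (msneg_pmf Ms v H) (\<lambda>um.
      bind_pmf (seq_pmf (?ps um)) (\<lambda>ts. univer_dec Mb Ms p v d (DT (zip (hs @ [um]) ts))))"
    unfolding Ub_def using cs by (simp add: hs_def H_def Let_def bind_assoc_pmf bind_map_pmf o_def del: upt_Suc)
  also have "\<dots> = bind_pmf (msneg_pmf Ms v H) (\<lambda>um.
      bind_pmf (seq_pmf (?ps um)) (\<lambda>ts. first_some (map (\<lambda>j. ?F um j (ts!j)) [0..<length (?ps um)]) (?q um)))"
  proof (intro bind_pmf_cong refl)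
    fix um ts assume "ts \<in> set_pmf (seq_pmf (?ps um))"
    then have lts: "length ts = length cs" using seq_length by fastforce
    have z: "zip (hs @ [um]) ts \<noteq> []" using lts lus[of um] cs by (cases ts) auto
    have m: "map fst (zip (hs @ [um]) ts) = hs @ [um]" using lts lus[of um] by simp
    show "univer_dec Mb Ms p v d (DT (zip (hs @ [um]) ts)) =
        first_some (map (\<lambda>j. ?F um j (ts!j)) [0..<length (?ps um)]) (?q um)"
      apply (subst univer_dec.simps)
      unfolding Let_def m using z lts lus[of um]
      by (auto simp: H_def intro!: arg_cong2[where f=first_some] map_cong)
  qed
  also have "\<dots> = bind_pmf (msneg_pmf Ms v H) (\<lambda>um.
      first_some (map (\<lambda>j. bind_pmf (?ps um ! j) (?F um j)) [0..<length (?ps um)]) (?q um))"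
    by (subst seq_first_some) rule
  also have "\<dots> = bind_pmf (msneg_pmf Ms v H) (\<lambda>um.
      first_some (map (\<lambda>j. Ub Mb Ms topk (?P um ((hs@[um])!j) / (1 - (\<Sum>i<j. ?P um ((hs@[um])!i)))) (v @ [(hs@[um])!j]) (Suc d) (cs!j)) [0..<length cs]) (?q um))"
    by (intro bind_pmf_cong refl arg_cong2[where f=first_some] map_cong) (auto simp: Ub_def)
  finally show ?thesis unfolding hs_def H_def .
qed




abbreviation gd :: "nat pmf \<Rightarrow> ennreal" where "gd X \<equiv> \<integral>\<^sup>+ n. of_nat n \<partial>measure_pmf X"

lemma pmf_tok: assumes w: "\<And>x. 0 \<le> w x" "(\<Sum>x\<in>UNIV. w x) \<le> 1"
  shows "pmf (token_or_stop_pmf w) z = (case z of None \<Rightarrow> 1 - (\<Sum>x\<in>UNIV. w x) | Some x \<Rightarrow> w x)"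
proof -
  let ?f = "\<lambda>z. case z of None \<Rightarrow> 1 - (\<Sum>x\<in>UNIV. w x) | Some x \<Rightarrow> w x"
  have e: "token_or_stop_pmf w = embed_pmf ?f" unfolding token_or_stop_pmf_def using w by simp
  have nn: "\<And>z. 0 \<le> ?f z" using w by (auto split: option.split)
  have "(\<Sum>z\<in>UNIV. ?f z) = 1"
    by (simp add: UNIV_option_conv sum.reindex)
  then have "(\<Sum>z\<in>UNIV. ennreal (?f z)) = 1" using nn by (subst sum_ennreal) auto
  then have "(\<integral>\<^sup>+ z. ennreal (?f z) \<partial>count_space UNIV) = 1"
    by (simp add: nn_integral_count_space_finite)
  then show ?thesis unfolding e using nn by (subst pmf_embed_pmf) auto
qed

lemma nn_tok: assumes w: "\<And>x. 0 \<le> w x" "(\<Sum>x\<in>UNIV. w x) \<le> 1"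
  shows "(\<integral>\<^sup>+ y. f y \<partial>measure_pmf (token_or_stop_pmf w)) =
     f None * ennreal (1 - (\<Sum>x\<in>UNIV. w x)) + (\<Sum>x\<in>UNIV. f (Some x) * ennreal (w x))"
  by (simp add: nn_fin pmf_tok[OF w] UNIV_option_conv sum.reindex)

lemma seq_branch_in:
  assumes us: "distinct us" "length us = length ps" and j: "j < length ps"
  shows "(\<integral>\<^sup>+ ts. g (case map_of (zip us ts) (us!j) of None \<Rightarrow> A | Some t \<Rightarrow> B t) \<partial>measure_pmf (seq_pmf ps))
    = (\<integral>\<^sup>+ t. g (B t) \<partial>measure_pmf (ps!j))"
proof -
  have "(\<integral>\<^sup>+ ts. g (case map_of (zip us ts) (us!j) of None \<Rightarrow> A | Some t \<Rightarrow> B t) \<partial>measure_pmf (seq_pmf ps))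
     = (\<integral>\<^sup>+ ts. g (B (ts!j)) \<partial>measure_pmf (seq_pmf ps))"
  proof (intro nn_integral_cong_AE, unfold AE_measure_pmf_iff, intro ballI)
    fix ts assume "ts \<in> set_pmf (seq_pmf ps)"
    then have "length ts = length ps" by (rule seq_length)
    then show "g (case map_of (zip us ts) (us!j) of None \<Rightarrow> A | Some t \<Rightarrow> B t) = g (B (ts!j))"
      using us j by (simp add: map_of_zip_nth)
  qed
  also have "\<dots> = (\<integral>\<^sup>+ t. g (B t) \<partial>measure_pmf (map_pmf (\<lambda>ts. ts!j) (seq_pmf ps)))" by simp
  finally show ?thesis using seq_nth[OF j] by simp
qed

lemma seq_branch_out:
  assumes us: "length us = length ps" and x: "x \<notin> set us"
  shows "(\<integral>\<^sup>+ ts. g (case map_of (zip us ts) x of None \<Rightarrow> A | Some t \<Rightarrow> B t) \<partial>measure_pmf (seq_pmf ps))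
    = g A"
proof -
  have "(\<integral>\<^sup>+ ts. g (case map_of (zip us ts) x of None \<Rightarrow> A | Some t \<Rightarrow> B t) \<partial>measure_pmf (seq_pmf ps))
     = (\<integral>\<^sup>+ ts. g A \<partial>measure_pmf (seq_pmf ps))"
  proof (intro nn_integral_cong_AE, unfold AE_measure_pmf_iff, intro ballI)
    fix ts assume "ts \<in> set_pmf (seq_pmf ps)"
    then have "length ts = length ps" by (rule seq_length)
    then have "map_of (zip us ts) x = None" using us x by simp
    then show "g (case map_of (zip us ts) x of None \<Rightarrow> A | Some t \<Rightarrow> B t) = g A"
      by simp
  qed
  then show ?thesis by (simp add: measure_pmf.emeasure_space_1)
qed




lemma G_node:
  assumes cs: "cs \<noteq> []" and len: "length (topk v (length cs - 1)) = length cs - 1"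
    and dis: "distinct (topk v (length cs - 1))" and HU: "set (topk v (length cs - 1)) \<noteq> UNIV"
  defines "hs \<equiv> topk v (length cs - 1)"
  defines "H \<equiv> set hs"
  shows "gd (Gb Mb Ms topk v d (Sh cs)) = (\<Sum>um\<in>UNIV. ennreal (msneg Ms v H um) *
     ((\<Sum>j<length cs. ennreal (pv Mb Ms v H um 1 ((hs@[um]) ! j)) * gd (Gb Mb Ms topk (v @ [(hs@[um]) ! j]) (Suc d) (cs!j)))
      + ennreal (1 - (\<Sum>j<length cs. pv Mb Ms v H um 1 ((hs@[um]) ! j))) * of_nat d))"
proof -
  have lus: "\<And>um. length (hs @ [um]) = length cs" using len cs unfolding hs_def by simp
  have HU': "H \<noteq> UNIV" using HU unfolding H_def hs_def .
  let ?ps = "\<lambda>um. map (\<lambda>j. sample_tree Ms topk (v @ [(hs @ [um]) ! j]) (cs ! j)) [0..<length cs]"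
  have "Gb Mb Ms topk v d (Sh cs) = bind_pmf (msneg_pmf Ms v H) (\<lambda>um.
      bind_pmf (seq_pmf (?ps um)) (\<lambda>ts. greedy Mb Ms v d (DT (zip (hs @ [um]) ts))))"
    unfolding Gb_def using cs by (simp add: hs_def H_def Let_def bind_assoc_pmf bind_map_pmf o_def del: upt_Suc)
  then have "gd (Gb Mb Ms topk v d (Sh cs)) = (\<integral>\<^sup>+ um. (\<integral>\<^sup>+ ts. gd (greedy Mb Ms v d (DT (zip (hs @ [um]) ts))) \<partial>measure_pmf (seq_pmf (?ps um))) \<partial>measure_pmf (msneg_pmf Ms v H))"
    by simp
  also have "\<dots> = (\<Sum>um\<in>UNIV. (\<integral>\<^sup>+ ts. gd (greedy Mb Ms v d (DT (zip (hs @ [um]) ts))) \<partial>measure_pmf (seq_pmf (?ps um))) * ennreal (msneg Ms v H um))"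
    by (simp add: nn_fin pmf_mn[OF HU'])
  also have "\<dots> = (\<Sum>um\<in>UNIV. ennreal (msneg Ms v H um) *
     ((\<Sum>j<length cs. ennreal (pv Mb Ms v H um 1 ((hs@[um]) ! j)) * gd (Gb Mb Ms topk (v @ [(hs@[um]) ! j]) (Suc d) (cs!j)))
      + ennreal (1 - (\<Sum>j<length cs. pv Mb Ms v H um 1 ((hs@[um]) ! j))) * of_nat d))"
  proof (intro sum.cong refl)
    fix um
    show "(\<integral>\<^sup>+ ts. gd (greedy Mb Ms v d (DT (zip (hs @ [um]) ts))) \<partial>measure_pmf (seq_pmf (?ps um))) * ennreal (msneg Ms v H um) =
      ennreal (msneg Ms v H um) *
     ((\<Sum>j<length cs. ennreal (pv Mb Ms v H um 1 ((hs@[um]) ! j)) * gd (Gb Mb Ms topk (v @ [(hs@[um]) ! j]) (Suc d) (cs!j)))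
      + ennreal (1 - (\<Sum>j<length cs. pv Mb Ms v H um 1 ((hs@[um]) ! j))) * of_nat d)"
    proof (cases "msneg Ms v H um > 0")
      case False
      then have "msneg Ms v H um = 0" using mn_nonneg[where Ms=Ms and v=v and H=H and x=um, OF HU'] by simp
      then show ?thesis by simp
    next
      case True
      let ?us = "hs @ [um]"
      let ?w = "pv Mb Ms v H um 1"
      have umH: "um \<notin> H" using True mn_H[where Ms=Ms and v=v and H=H, OF HU'] by fastforce
      have dus: "distinct ?us" using dis umH unfolding H_def hs_def by simp
      have w: "\<And>x. 0 \<le> ?w x" "(\<Sum>x\<in>UNIV. ?w x) \<le> 1"
        using pv_nonneg[where Mb=Mb and Ms=Ms and v=v and H=H and p=1 and um=um, OF HU'] 
          pv_sum_le[where Mb=Mb and Ms=Ms and v=v and H=H and p=1 and um=um, OF HU'] True by auto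
      let ?g = "\<lambda>x ts. gd (case map_of (zip ?us ts) x of None \<Rightarrow> return_pmf d | Some t \<Rightarrow> greedy Mb Ms (v @ [x]) (Suc d) t)"
      have "(\<integral>\<^sup>+ ts. gd (greedy Mb Ms v d (DT (zip ?us ts))) \<partial>measure_pmf (seq_pmf (?ps um)))
         = (\<integral>\<^sup>+ ts. (of_nat d * ennreal (1 - (\<Sum>x\<in>UNIV. ?w x)) + (\<Sum>x\<in>UNIV. ?g x ts * ennreal (?w x))) \<partial>measure_pmf (seq_pmf (?ps um)))"
      proof (intro nn_integral_cong_AE, unfold AE_measure_pmf_iff, intro ballI)
        fix ts assume "ts \<in> set_pmf (seq_pmf (?ps um))"
        then have lts: "length ts = length cs" using seq_length by fastforce
        have z: "zip ?us ts \<noteq> []" using lts lus[of um] cs by (cases ts) auto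
        have m: "map fst (zip ?us ts) = ?us" using lts lus[of um] by simp
        have "greedy Mb Ms v d (DT (zip ?us ts)) = bind_pmf (token_or_stop_pmf ?w) (\<lambda>y.
              case y of None \<Rightarrow> return_pmf d
              | Some x \<Rightarrow> (case map_of (zip ?us ts) x of None \<Rightarrow> return_pmf d
                          | Some t \<Rightarrow> greedy Mb Ms (v @ [x]) (Suc d) t))"
          apply (subst greedy.simps) unfolding Let_def m using z by (simp add: H_def)
        then show "gd (greedy Mb Ms v d (DT (zip ?us ts))) = of_nat d * ennreal (1 - (\<Sum>x\<in>UNIV. ?w x)) + (\<Sum>x\<in>UNIV. ?g x ts * ennreal (?w x))"
          by (simp add: nn_tok[OF w])
      qed
      also have "\<dots> = of_nat d * ennreal (1 - (\<Sum>x\<in>UNIV. ?w x)) + (\<Sum>x\<in>UNIV. (\<integral>\<^sup>+ ts. ?g x ts \<partial>measure_pmf (seq_pmf (?ps um))) * ennreal (?w x))"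
        by (simp add: nn_integral_add nn_integral_sum nn_integral_multc measure_pmf.emeasure_space_1)
      also have "(\<Sum>x\<in>UNIV. (\<integral>\<^sup>+ ts. ?g x ts \<partial>measure_pmf (seq_pmf (?ps um))) * ennreal (?w x))
         = (\<Sum>x\<in>set ?us. (\<integral>\<^sup>+ ts. ?g x ts \<partial>measure_pmf (seq_pmf (?ps um))) * ennreal (?w x))
         + (\<Sum>x\<in>-set ?us. (\<integral>\<^sup>+ ts. ?g x ts \<partial>measure_pmf (seq_pmf (?ps um))) * ennreal (?w x))"
        by (subst sum.subset_diff[of "set ?us" UNIV]) (auto simp: Compl_eq_Diff_UNIV add.commute)
      also have "(\<Sum>x\<in>set ?us. (\<integral>\<^sup>+ ts. ?g x ts \<partial>measure_pmf (seq_pmf (?ps um))) * ennreal (?w x))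
          = (\<Sum>j<length cs. (\<integral>\<^sup>+ ts. ?g (?us!j) ts \<partial>measure_pmf (seq_pmf (?ps um))) * ennreal (?w (?us!j)))"
        using sum_idx_all[OF dus, of "\<lambda>x. (\<integral>\<^sup>+ ts. ?g x ts \<partial>measure_pmf (seq_pmf (?ps um))) * ennreal (?w x)"]
        unfolding lus[of um] by (rule sym)
      also have "\<dots> = (\<Sum>j<length cs. gd (Gb Mb Ms topk (v @ [?us ! j]) (Suc d) (cs!j)) * ennreal (?w (?us!j)))"
      proof (intro sum.cong refl)
        fix j assume j: "j \<in> {..<length cs}"
        have "(\<integral>\<^sup>+ ts. ?g (?us!j) ts \<partial>measure_pmf (seq_pmf (?ps um))) =
          (\<integral>\<^sup>+ t. gd (greedy Mb Ms (v @ [?us!j]) (Suc d) t) \<partial>measure_pmf (?ps um ! j))"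
          by (rule seq_branch_in[where g=gd]) (use dus lus[of um] j in auto)
        also have "\<dots> = gd (Gb Mb Ms topk (v @ [?us ! j]) (Suc d) (cs!j))"
          using j by (simp add: Gb_def del: upt_Suc)
        finally show "(\<integral>\<^sup>+ ts. ?g (?us!j) ts \<partial>measure_pmf (seq_pmf (?ps um))) * ennreal (?w (?us!j)) =
           gd (Gb Mb Ms topk (v @ [?us ! j]) (Suc d) (cs!j)) * ennreal (?w (?us!j))" by simp
      qed
      also have "(\<Sum>x\<in>-set ?us. (\<integral>\<^sup>+ ts. ?g x ts \<partial>measure_pmf (seq_pmf (?ps um))) * ennreal (?w x))
          = (\<Sum>x\<in>-set ?us. of_nat d * ennreal (?w x))"
      proof (intro sum.cong refl)
        fix x assume x: "x \<in> - set ?us"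
        have "(\<integral>\<^sup>+ ts. ?g x ts \<partial>measure_pmf (seq_pmf (?ps um))) = gd (return_pmf d)"
          by (rule seq_branch_out[where g=gd]) (use x lus[of um] in auto)
        then show "(\<integral>\<^sup>+ ts. ?g x ts \<partial>measure_pmf (seq_pmf (?ps um))) * ennreal (?w x) = of_nat d * ennreal (?w x)"
          by simp
      qed
      also have "(\<Sum>x\<in>-set ?us. of_nat d * ennreal (?w x)) = of_nat d * ennreal (\<Sum>x\<in>-set ?us. ?w x)"
      proof -
        have "ennreal (\<Sum>x\<in>-set ?us. ?w x) = (\<Sum>x\<in>-set ?us. ennreal (?w x))"
          using w by (intro sum_ennreal[symmetric]) auto
        then show ?thesis by (simp only: sum_distrib_left)
      qed
      finally have "(\<integral>\<^sup>+ ts. gd (greedy Mb Ms v d (DT (zip ?us ts))) \<partial>measure_pmf (seq_pmf (?ps um)))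
         = (\<Sum>j<length cs. gd (Gb Mb Ms topk (v @ [?us ! j]) (Suc d) (cs!j)) * ennreal (?w (?us!j)))
           + of_nat d * (ennreal (1 - (\<Sum>x\<in>UNIV. ?w x)) + ennreal (\<Sum>x\<in>-set ?us. ?w x))"
        by (simp add: distrib_left algebra_simps)
      also have "ennreal (1 - (\<Sum>x\<in>UNIV. ?w x)) + ennreal (\<Sum>x\<in>-set ?us. ?w x)
          = ennreal (1 - (\<Sum>j<length cs. ?w (?us ! j)))"
      proof -
        have "(\<Sum>x\<in>UNIV. ?w x) = (\<Sum>x\<in>set ?us. ?w x) + (\<Sum>x\<in>-set ?us. ?w x)"
          by (subst sum.subset_diff[of "set ?us" UNIV]) (auto simp: Compl_eq_Diff_UNIV add.commute)
        moreover have "(\<Sum>x\<in>set ?us. ?w x) = (\<Sum>j<length cs. ?w (?us ! j))"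
          using sum_idx_all[OF dus, of ?w] unfolding lus[of um] by (rule sym)
        ultimately show ?thesis using w
          by (subst ennreal_plus[symmetric]) (auto intro!: sum_nonneg arg_cong[where f=ennreal])
      qed
      finally show ?thesis by (simp add: algebra_simps)
    qed
  qed
  finally show ?thesis .
qed




definition depo :: "nat option \<Rightarrow> ennreal" where
  "depo r = (case r of None \<Rightarrow> 0 | Some n \<Rightarrow> of_nat n)"

abbreviation dep :: "nat option pmf \<Rightarrow> ennreal" where "dep X \<equiv> \<integral>\<^sup>+ r. depo r \<partial>measure_pmf X"

lemma depo_case: "(\<lambda>r. case r of None \<Rightarrow> 0 | Some y \<Rightarrow> depo (Some y)) = depo"
  by (rule ext) (simp add: depo_def split: option.split)

lemma pmf_accept: assumes q: "0 \<le> q" "q \<le> 1" shows "pmf (accept_test q d) None = 1 - q"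
proof -
  have "ennreal (pmf (accept_test q d) None) = (\<integral>\<^sup>+ r. indicator {None} r \<partial>measure_pmf (accept_test q d))"
    by (simp add: emeasure_pmf_single)
  also have "\<dots> = ennreal (1 - q)" unfolding accept_test_def using q by (simp add: nn_fin UNIV_bool indicator_def)
  finally show ?thesis using q by simp
qed

lemma dep_accept: "0 \<le> q \<Longrightarrow> q \<le> 1 \<Longrightarrow> dep (accept_test q d) = ennreal q * of_nat d"
  unfolding accept_test_def by (simp add: nn_fin UNIV_bool depo_def mult.commute)

lemma greedy_ge: "n \<in> set_pmf (greedy Mb Ms v d T) \<Longrightarrow> d \<le> n"
proof (induction Mb Ms v d T arbitrary: n rule: greedy.induct)
  case (1 Mb Ms v d cs)
  show ?case
  proof (cases "cs = []")
    case True then show ?thesis using 1(2) by simp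
  next
    case False
    have IH: "\<And>y x t n. y \<in> set_pmf (token_or_stop_pmf (pv Mb Ms v (set (butlast (map fst cs))) (last (map fst cs)) 1))
       \<Longrightarrow> y = Some x \<Longrightarrow> map_of cs x = Some t \<Longrightarrow> n \<in> set_pmf (greedy Mb Ms (v @ [x]) (Suc d) t) \<Longrightarrow> Suc d \<le> n"
      using 1(1)[OF False refl refl refl] by blast
    from 1(2) False obtain y where y: "y \<in> set_pmf (token_or_stop_pmf (pv Mb Ms v (set (butlast (map fst cs))) (last (map fst cs)) 1))"
      and n: "n \<in> set_pmf (case y of None \<Rightarrow> return_pmf d | Some x \<Rightarrow> (case map_of cs x of None \<Rightarrow> return_pmf d
                          | Some t \<Rightarrow> greedy Mb Ms (v @ [x]) (Suc d) t))"
      by (auto simp: Let_def)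
    show ?thesis
    proof (cases y)
      case None then show ?thesis using n by simp
    next
      case (Some x)
      show ?thesis
      proof (cases "map_of cs x")
        case None then show ?thesis using n Some by simp
      next
        case (Some t) then show ?thesis using n \<open>y = Some x\<close> IH[OF y \<open>y = Some x\<close> Some] by fastforce
      qed
    qed
  qed
qed

lemma gd_ge: "of_nat d \<le> gd (Gb Mb Ms topk v d s)"
proof -
  have "(\<integral>\<^sup>+ n. of_nat d \<partial>measure_pmf (Gb Mb Ms topk v d s)) \<le> gd (Gb Mb Ms topk v d s)"
    by (intro nn_integral_mono_AE) (auto simp: AE_measure_pmf_iff Gb_def dest: greedy_ge)
  then show ?thesis by (simp add: measure_pmf.emeasure_space_1)
qed




lemma T_facts:
  fixes P :: "'a::finite \<Rightarrow> real" and us :: "'a list" and X :: "nat \<Rightarrow> nat option pmf"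
  assumes Pn: "\<And>u. 0 \<le> P u" and Ps: "(\<Sum>u\<in>UNIV. P u) \<le> 1" and dis: "distinct us"
    and hX: "\<And>j. j < length us \<Longrightarrow> pmf (X j) None = 1 - P (us!j) / (1 - (\<Sum>i<j. P (us!i)))"
  defines "pr \<equiv> 1 - (1 - (\<Sum>u\<in>UNIV. P u)) / (1 - (\<Sum>i<length us. P (us!i)))"
  shows "pmf (first_some (map X [0..<length us]) (accept_test pr d)) None = 1 - (\<Sum>u\<in>UNIV. P u)"
    "dep (first_some (map X [0..<length us]) (accept_test pr d)) =
      (\<Sum>j<length us. ennreal (1 - (\<Sum>i<j. P (us!i))) * dep (X j))
      + ennreal ((\<Sum>u\<in>UNIV. P u) - (\<Sum>i<length us. P (us!i))) * of_nat d"
proof -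
  note pf = pres_facts[OF Pn Ps dis]
  have pr: "0 \<le> pr" "pr \<le> 1" using pf unfolding pr_def by auto
  have prodj: "\<And>j. j \<le> length us \<Longrightarrow> (\<Prod>i<j. pmf (map X [0..<length us] ! i) None) = 1 - (\<Sum>i<j. P (us!i))"
  proof -
    fix j assume j: "j \<le> length us"
    have "(\<Prod>i<j. pmf (map X [0..<length us] ! i) None) = (\<Prod>i<j. 1 - P (us!i) / (1 - (\<Sum>k<i. P (us!k))))"
      using j by (intro prod.cong refl) (simp add: hX)
    also have "\<dots> = 1 - (\<Sum>i<j. P (us!i))" using prod_pch[OF Pn Ps dis j] .
    finally show "(\<Prod>i<j. pmf (map X [0..<length us] ! i) None) = 1 - (\<Sum>i<j. P (us!i))" .
  qed
  show "pmf (first_some (map X [0..<length us]) (accept_test pr d)) None = 1 - (\<Sum>u\<in>UNIV. P u)"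
    unfolding pmf_first_some using prodj[of "length us"] pf(3) pr
    by (simp add: pmf_accept pr_def)
  have "dep (first_some (map X [0..<length us]) (accept_test pr d)) =
      (\<Sum>j<length us. ennreal (1 - (\<Sum>i<j. P (us!i))) * dep (X j))
      + ennreal (1 - (\<Sum>i<length us. P (us!i))) * (ennreal pr * of_nat d)"
    unfolding nn_first_some depo_case using prodj pr
    by (simp add: dep_accept)
  also have "ennreal (1 - (\<Sum>i<length us. P (us!i))) * (ennreal pr * of_nat d)
     = ennreal ((\<Sum>u\<in>UNIV. P u) - (\<Sum>i<length us. P (us!i))) * of_nat d"
    using pf(4) pr PP_le[OF Pn Ps dis, of "length us"]
    by (simp add: ennreal_mult'[symmetric] mult.assoc[symmetric] pr_def)
  finally show "dep (first_some (map X [0..<length us]) (accept_test pr d)) =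
      (\<Sum>j<length us. ennreal (1 - (\<Sum>i<j. P (us!i))) * dep (X j))
      + ennreal ((\<Sum>u\<in>UNIV. P u) - (\<Sum>i<length us. P (us!i))) * of_nat d" .
qed

lemma sum_ennreal_const: "(\<And>x. 0 \<le> a x) \<Longrightarrow> (\<And>x. 0 \<le> f x) \<Longrightarrow>
   (\<Sum>x\<in>A. ennreal (a x) * (ennreal (f x) * c)) = ennreal (\<Sum>x\<in>A. a x * f x) * c"
proof -
  assume a: "\<And>x. 0 \<le> a x" and f: "\<And>x. 0 \<le> f x"
  have "(\<Sum>x\<in>A. ennreal (a x) * (ennreal (f x) * c)) = (\<Sum>x\<in>A. ennreal (a x * f x)) * c"
    using a by (simp add: sum_distrib_right ennreal_mult' mult.assoc)
  also have "(\<Sum>x\<in>A. ennreal (a x * f x)) = ennreal (\<Sum>x\<in>A. a x * f x)"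
    using a f by (intro sum_ennreal) auto
  finally show ?thesis .
qed

lemma sum_split_ennreal: "(\<Sum>x\<in>A. (c x::ennreal) * (a x + (\<Sum>j\<in>J. b x j))) = (\<Sum>x\<in>A. c x * a x) + (\<Sum>j\<in>J. \<Sum>x\<in>A. c x * b x j)"
  by (simp add: distrib_left sum.distrib sum_distrib_left sum.swap[of _ J A])

context
  fixes Mb Ms :: "'a::finite list \<Rightarrow> 'a pmf" and topk :: "'a list \<Rightarrow> nat \<Rightarrow> 'a list"
  assumes top_ok: "\<And>v k. k < CARD('a) \<Longrightarrow>
      length (topk v k) = k \<and> distinct (topk v k)
      \<and> sorted_wrt (\<lambda>x y. pmf (Ms v) y \<le> pmf (Ms v) x) (topk v k)
      \<and> (\<forall>x\<in>set (topk v k). \<forall>y. y \<notin> set (topk v k) \<longrightarrow> pmf (Ms v) y \<le> pmf (Ms v) x)"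
begin

lemma main:
  "shape_ok CARD('a) s \<Longrightarrow> 0 \<le> p \<Longrightarrow> p \<le> 1 \<Longrightarrow>
   pmf (Ub Mb Ms topk p v d s) None = 1 - p \<and>
   ennreal p * gd (Gb Mb Ms topk v d s) \<le> dep (Ub Mb Ms topk p v d s) \<and>
   dep (Ub Mb Ms topk p v d s) \<le> ennreal p * of_nat (d + size s)"
proof (induction s arbitrary: p v d)
  case (Sh cs)
  show ?case
  proof (cases "cs = []")
    case True
    have U: "Ub Mb Ms topk p v d (Sh cs) = accept_test p d" using True by (simp add: Ub_def bind_return_pmf)
    have G: "Gb Mb Ms topk v d (Sh cs) = return_pmf d" using True by (simp add: Gb_def bind_return_pmf)
    show ?thesis unfolding U G using Sh.prems
      by (simp add: pmf_accept dep_accept mult_left_mono)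
  next
    case False
    define m where "m = length cs"
    define hs where "hs = topk v (m - 1)"
    define H where "H = set hs"
    have m1: "1 \<le> m" using False unfolding m_def by (cases cs) auto
    have mC: "m \<le> CARD('a)" using Sh.prems(1) unfolding m_def by simp
    have top: "length hs = m - 1" "distinct hs" using top_ok[of "m - 1" v] m1 mC unfolding hs_def by auto
    have HU: "H \<noteq> UNIV"
    proof
      assume "H = UNIV"
      then have "card H = CARD('a)" by simp
      moreover have "card H \<le> m - 1" unfolding H_def using card_length[of hs] top by simp
      ultimately show False using m1 mC by simp
    qed
    have IH: "\<And>j p' v' d'. j < m \<Longrightarrow> 0 \<le> p' \<Longrightarrow> p' \<le> 1 \<Longrightarrow>
      pmf (Ub Mb Ms topk p' v' d' (cs!j)) None = 1 - p' \<and>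
      ennreal p' * gd (Gb Mb Ms topk v' d' (cs!j)) \<le> dep (Ub Mb Ms topk p' v' d' (cs!j)) \<and>
      dep (Ub Mb Ms topk p' v' d' (cs!j)) \<le> ennreal p' * of_nat (d' + size (cs!j))"
    proof -
      fix j d' :: nat and p' :: real and v' assume j: "j < m" and p': "0 \<le> p'" "p' \<le> 1"
      have c: "cs!j \<in> set cs" using j unfolding m_def by simp
      then have "shape_ok CARD('a) (cs!j)" using Sh.prems(1) by simp
      then show "pmf (Ub Mb Ms topk p' v' d' (cs!j)) None = 1 - p' \<and>
      ennreal p' * gd (Gb Mb Ms topk v' d' (cs!j)) \<le> dep (Ub Mb Ms topk p' v' d' (cs!j)) \<and>
      dep (Ub Mb Ms topk p' v' d' (cs!j)) \<le> ennreal p' * of_nat (d' + size (cs!j))"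
        using Sh.IH[OF c _ p'] by blast
    qed
    have sz: "\<And>j. j < m \<Longrightarrow> Suc d + size (cs!j) \<le> d + size (Sh cs)"
    proof -
      fix j assume "j < m"
      then have "size (cs!j) \<le> size_list size cs" unfolding m_def
        by (intro size_list_estimation') auto
      then show "Suc d + size (cs!j) \<le> d + size (Sh cs)" by simp
    qed
    define P where "P um = pv Mb Ms v H um p" for um
    define w where "w um = pv Mb Ms v H um 1" for um
    define us where "us um = hs @ [um]" for um
    define pch where "pch um j = P um (us um ! j) / (1 - (\<Sum>i<j. P um (us um ! i)))" for um j
    define X where "X um j = Ub Mb Ms topk (pch um j) (v @ [us um ! j]) (Suc d) (cs!j)" for um j
    define T where "T um = first_some (map (X um) [0..<m])
       (accept_test (1 - (1 - (\<Sum>u\<in>UNIV. P um u)) / (1 - (\<Sum>i<length (us um). P um (us um ! i)))) d)" for um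
    have len_us: "\<And>um. length (us um) = m" unfolding us_def using top m1 by simp
    have Ueq: "Ub Mb Ms topk p v d (Sh cs) = bind_pmf (msneg_pmf Ms v H) T"
      using U_node[OF False, of topk v Mb Ms p d] top(1) len_us
      unfolding T_def X_def pch_def P_def us_def H_def hs_def m_def by simp
    have mn0: "\<And>um. 0 \<le> msneg Ms v H um" using mn_nonneg[where Ms=Ms and v=v and H=H, OF HU] .
    have good: "um \<notin> H \<and> distinct (us um) \<and> (\<forall>u. 0 \<le> P um u) \<and> (\<Sum>u\<in>UNIV. P um u) \<le> 1
        \<and> (\<forall>u. 0 \<le> w um u) \<and> (\<Sum>u\<in>UNIV. w um u) \<le> 1" if um: "msneg Ms v H um > 0" for um
    proof -
      have "um \<notin> H" using um mn_H[where Ms=Ms and v=v and H=H, OF HU] by fastforce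
      moreover have "distinct (us um)" using top(2) \<open>um \<notin> H\<close> unfolding us_def H_def by simp
      ultimately show ?thesis unfolding P_def w_def
        using pv_nonneg[where Mb=Mb and Ms=Ms and v=v and H=H, OF HU] pv_sum_le[where Mb=Mb and Ms=Ms and v=v and H=H, OF HU] um Sh.prems
        by auto
    qed
    have pchr: "0 \<le> pch um j \<and> pch um j \<le> 1" if um: "msneg Ms v H um > 0" and j: "j < m" for um j
      using pch_range[of "P um" "us um" j] good[OF um] j len_us unfolding pch_def by auto
    have Tf: "pmf (T um) None = 1 - (\<Sum>u\<in>UNIV. P um u) \<and>
       dep (T um) = (\<Sum>j<m. ennreal (1 - (\<Sum>i<j. P um (us um ! i))) * dep (X um j))
       + ennreal ((\<Sum>u\<in>UNIV. P um u) - (\<Sum>i<m. P um (us um ! i))) * of_nat d"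
      if um: "msneg Ms v H um > 0" for um
    proof -
      have hX: "\<And>j. j < length (us um) \<Longrightarrow> pmf (X um j) None = 1 - P um (us um ! j) / (1 - (\<Sum>i<j. P um (us um ! i)))"
        using IH pchr[OF um] len_us unfolding X_def pch_def by auto
      have Tu: "T um = first_some (map (X um) [0..<length (us um)])
       (accept_test (1 - (1 - (\<Sum>u\<in>UNIV. P um u)) / (1 - (\<Sum>i<length (us um). P um (us um ! i)))) d)"
        unfolding T_def len_us ..
      show ?thesis unfolding Tu using T_facts[of "P um" "us um" "X um", OF _ _ _ hX] good[OF um] len_us by auto
    qed
    have pa: "pmf (Ub Mb Ms topk p v d (Sh cs)) None = 1 - p"
    proof -
      have "pmf (Ub Mb Ms topk p v d (Sh cs)) None = (\<Sum>um\<in>UNIV. pmf (T um) None * msneg Ms v H um)"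
        unfolding Ueq pmf_bind by (subst integral_measure_pmf_real[of UNIV]) (auto simp: pmf_mn[OF HU])
      also have "\<dots> = (\<Sum>um\<in>UNIV. msneg Ms v H um - msneg Ms v H um * (\<Sum>u\<in>UNIV. P um u))"
      proof (intro sum.cong refl)
        fix um show "pmf (T um) None * msneg Ms v H um = msneg Ms v H um - msneg Ms v H um * (\<Sum>u\<in>UNIV. P um u)"
        proof (cases "msneg Ms v H um > 0")
          case True
          have e: "pmf (T um) None = 1 - (\<Sum>u\<in>UNIV. P um u)" using Tf[OF True] by blast
          show ?thesis unfolding e left_diff_distrib by (simp add: mult.commute)
        next
          case False then have "msneg Ms v H um = 0" using mn0[of um] by simp
          then show ?thesis by simp
        qed
      qed
      also have "\<dots> = 1 - p" unfolding sum_subtractf mn_sum[OF HU] P_def pv_avg[OF HU Sh.prems(2,3)] ..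
      finally show ?thesis .
    qed
    have depU: "dep (Ub Mb Ms topk p v d (Sh cs)) = (\<Sum>um\<in>UNIV. dep (T um) * ennreal (msneg Ms v H um))"
      unfolding Ueq by (simp add: nn_fin pmf_mn[OF HU])
    define K :: ennreal where "K = of_nat (d + size (Sh cs))"
    have PPle: "(\<Sum>i<m. P um (us um ! i)) \<le> (\<Sum>u\<in>UNIV. P um u)" if um: "msneg Ms v H um > 0" for um
      using sum_idx_le[of "us um" m "P um"] good[OF um] len_us by auto
    have PPsum: "(\<Sum>j<m. ennreal (P um (us um ! j))) = ennreal (\<Sum>i<m. P um (us um ! i))" if um: "msneg Ms v H um > 0" for um
      using good[OF um] by (intro sum_ennreal) auto
    have pchm: "ennreal (1 - (\<Sum>i<j. P um (us um ! i))) * ennreal (pch um j) = ennreal (P um (us um ! j))"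
      if um: "msneg Ms v H um > 0" and j: "j < m" for um j
    proof -
      have nn: "0 \<le> 1 - (\<Sum>i<j. P um (us um ! i))" using PP_le[of "P um" "us um" j] good[OF um] j len_us by auto
      have "(1 - (\<Sum>i<j. P um (us um ! i))) * pch um j = P um (us um ! j)"
        unfolding pch_def using pch_mult[of "P um" "us um" j] good[OF um] j len_us by auto
      then show ?thesis unfolding ennreal_mult'[OF nn, of "pch um j", symmetric] by simp
    qed
    have upT: "dep (T um) \<le> ennreal (\<Sum>u\<in>UNIV. P um u) * K" if um: "msneg Ms v H um > 0" for um
    proof -
      have "dep (T um) = (\<Sum>j<m. ennreal (1 - (\<Sum>i<j. P um (us um ! i))) * dep (X um j))
       + ennreal ((\<Sum>u\<in>UNIV. P um u) - (\<Sum>i<m. P um (us um ! i))) * of_nat d" using Tf[OF um] by blast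
      also have "\<dots> \<le> (\<Sum>j<m. ennreal (P um (us um ! j)) * K)
       + ennreal ((\<Sum>u\<in>UNIV. P um u) - (\<Sum>i<m. P um (us um ! i))) * K"
      proof (intro add_mono sum_mono)
        fix j assume "j \<in> {..<m}" then have j: "j < m" by simp
        have "ennreal (1 - (\<Sum>i<j. P um (us um ! i))) * dep (X um j)
           \<le> ennreal (1 - (\<Sum>i<j. P um (us um ! i))) * (ennreal (pch um j) * of_nat (Suc d + size (cs!j)))"
        proof -
          have "dep (X um j) \<le> ennreal (pch um j) * of_nat (Suc d + size (cs!j))"
            using IH[OF j conjunct1[OF pchr[OF um j]] conjunct2[OF pchr[OF um j]], where v'="v @ [us um ! j]" and d'="Suc d"]
            unfolding X_def by blast
          then show ?thesis by (intro mult_left_mono) auto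
        qed
        also have "\<dots> = ennreal (P um (us um ! j)) * of_nat (Suc d + size (cs!j))"
          using pchm[OF um j] by (simp add: mult.assoc[symmetric])
        also have "\<dots> \<le> ennreal (P um (us um ! j)) * K"
          unfolding K_def using sz[OF j] by (intro mult_left_mono) auto
        finally show "ennreal (1 - (\<Sum>i<j. P um (us um ! i))) * dep (X um j) \<le> ennreal (P um (us um ! j)) * K" .
      next
        show "ennreal ((\<Sum>u\<in>UNIV. P um u) - (\<Sum>i<m. P um (us um ! i))) * of_nat d
          \<le> ennreal ((\<Sum>u\<in>UNIV. P um u) - (\<Sum>i<m. P um (us um ! i))) * K"
          unfolding K_def by (intro mult_left_mono) auto
      qed
      also have "\<dots> = (ennreal (\<Sum>i<m. P um (us um ! i)) + ennreal ((\<Sum>u\<in>UNIV. P um u) - (\<Sum>i<m. P um (us um ! i)))) * K"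
        unfolding PPsum[OF um, symmetric] by (simp add: sum_distrib_right distrib_right)
      also have "\<dots> = ennreal (\<Sum>u\<in>UNIV. P um u) * K"
        using PPle[OF um] good[OF um] by (subst ennreal_plus[symmetric]) (auto intro!: sum_nonneg)
      finally show ?thesis .
    qed
    have pc: "dep (Ub Mb Ms topk p v d (Sh cs)) \<le> ennreal p * K"
    proof -
      have "dep (Ub Mb Ms topk p v d (Sh cs)) \<le> (\<Sum>um\<in>UNIV. ennreal (msneg Ms v H um * (\<Sum>u\<in>UNIV. P um u)) * K)"
        unfolding depU
      proof (intro sum_mono)
        fix um show "dep (T um) * ennreal (msneg Ms v H um) \<le> ennreal (msneg Ms v H um * (\<Sum>u\<in>UNIV. P um u)) * K"
        proof (cases "msneg Ms v H um > 0")
          case True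
          have "dep (T um) * ennreal (msneg Ms v H um) \<le> ennreal (\<Sum>u\<in>UNIV. P um u) * K * ennreal (msneg Ms v H um)"
            using upT[OF True] by (intro mult_right_mono) auto
          also have "\<dots> = ennreal (msneg Ms v H um * (\<Sum>u\<in>UNIV. P um u)) * K"
            using good[OF True] True by (simp add: ennreal_mult'' mult_ac sum_nonneg)
          finally show ?thesis .
        next
          case False then have "msneg Ms v H um = 0" using mn0[of um] by simp
          then show ?thesis by simp
        qed
      qed
      also have "\<dots> = ennreal (\<Sum>um\<in>UNIV. msneg Ms v H um * (\<Sum>u\<in>UNIV. P um u)) * K"
      proof -
        have "(\<Sum>um\<in>UNIV. ennreal (msneg Ms v H um * (\<Sum>u\<in>UNIV. P um u))) = ennreal (\<Sum>um\<in>UNIV. msneg Ms v H um * (\<Sum>u\<in>UNIV. P um u))"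
        proof (intro sum_ennreal)
          fix um show "0 \<le> msneg Ms v H um * (\<Sum>u\<in>UNIV. P um u)"
          proof (cases "msneg Ms v H um > 0")
            case True
            then have "0 \<le> (\<Sum>u\<in>UNIV. P um u)" using good[OF True] by (auto intro!: sum_nonneg)
            then show ?thesis using True by simp
          next
            case False then have "msneg Ms v H um = 0" using mn0[of um] by simp
            then show ?thesis by simp
          qed
        qed
        then show ?thesis by (simp only: sum_distrib_right[symmetric])
      qed
      also have "\<dots> = ennreal p * K" unfolding P_def pv_avg[OF HU Sh.prems(2,3)] ..
      finally show ?thesis .
    qed
    define Gc where "Gc um j = gd (Gb Mb Ms topk (v @ [us um ! j]) (Suc d) (cs!j))" for um j
    define g where "g um j = Gc um j - of_nat d" for um j
    have Gcg: "Gc um j = of_nat d + g um j" for um j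
    proof -
      have "of_nat (Suc d) \<le> Gc um j" unfolding Gc_def by (rule gd_ge)
      moreover have "(of_nat d::ennreal) \<le> of_nat (Suc d)" by (rule of_nat_mono) simp
      ultimately have "of_nat d \<le> Gc um j" by (rule order_trans[rotated])
      then show ?thesis unfolding g_def by (rule ennreal_ineq_diff_add)
    qed
    have Pnn: "0 \<le> P um u" for um u unfolding P_def using pv_nonneg[where Mb=Mb and Ms=Ms and v=v and H=H, OF HU] Sh.prems by auto
    have wnn: "0 \<le> w um u" for um u unfolding w_def using pv_nonneg[where Mb=Mb and Ms=Ms and v=v and H=H, OF HU] by auto
    have Geq: "gd (Gb Mb Ms topk v d (Sh cs)) = (\<Sum>um\<in>UNIV. ennreal (msneg Ms v H um) *
       ((\<Sum>j<m. ennreal (w um (us um ! j)) * Gc um j) + ennreal (1 - (\<Sum>j<m. w um (us um ! j))) * of_nat d))"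
      using G_node[OF False, where topk=topk and v=v and Mb=Mb and Ms=Ms and d=d] top len_us HU m1
      unfolding Gc_def w_def us_def H_def hs_def m_def by simp
    have lowT: "ennreal (\<Sum>u\<in>UNIV. P um u) * of_nat d + (\<Sum>j<m. ennreal (P um (us um ! j)) * g um j) \<le> dep (T um)"
      if um: "msneg Ms v H um > 0" for um
    proof -
      have "ennreal (\<Sum>u\<in>UNIV. P um u) * of_nat d + (\<Sum>j<m. ennreal (P um (us um ! j)) * g um j)
        = (ennreal (\<Sum>i<m. P um (us um ! i)) + ennreal ((\<Sum>u\<in>UNIV. P um u) - (\<Sum>i<m. P um (us um ! i)))) * of_nat d
          + (\<Sum>j<m. ennreal (P um (us um ! j)) * g um j)"
        using PPle[OF um] good[OF um] by (subst ennreal_plus[symmetric]) (auto intro!: sum_nonneg)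
      also have "\<dots> = (\<Sum>j<m. ennreal (P um (us um ! j)) * Gc um j)
          + ennreal ((\<Sum>u\<in>UNIV. P um u) - (\<Sum>i<m. P um (us um ! i))) * of_nat d"
        unfolding PPsum[OF um, symmetric] Gcg by (simp only: distrib_left sum.distrib sum_distrib_right[symmetric] distrib_right add_ac)
      also have "\<dots> \<le> (\<Sum>j<m. ennreal (1 - (\<Sum>i<j. P um (us um ! i))) * dep (X um j))
       + ennreal ((\<Sum>u\<in>UNIV. P um u) - (\<Sum>i<m. P um (us um ! i))) * of_nat d"
      proof (intro add_mono sum_mono order_refl)
        fix j assume "j \<in> {..<m}" then have j: "j < m" by simp
        have "ennreal (pch um j) * Gc um j \<le> dep (X um j)"
            using IH[OF j conjunct1[OF pchr[OF um j]] conjunct2[OF pchr[OF um j]], where v'="v @ [us um ! j]" and d'="Suc d"]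
            unfolding X_def Gc_def by blast
        then have "ennreal (1 - (\<Sum>i<j. P um (us um ! i))) * (ennreal (pch um j) * Gc um j) \<le> ennreal (1 - (\<Sum>i<j. P um (us um ! i))) * dep (X um j)"
          by (intro mult_left_mono) auto
        then show "ennreal (P um (us um ! j)) * Gc um j \<le> ennreal (1 - (\<Sum>i<j. P um (us um ! i))) * dep (X um j)"
          unfolding mult.assoc[symmetric] pchm[OF um j] .
      qed
      also have "\<dots> = dep (T um)" using Tf[OF um] by simp
      finally show ?thesis .
    qed
    have innerR: "(\<Sum>j<m. ennreal (w um (us um ! j)) * Gc um j) + ennreal (1 - (\<Sum>j<m. w um (us um ! j))) * of_nat d
       = of_nat d + (\<Sum>j<m. ennreal (w um (us um ! j)) * g um j)"
      if um: "msneg Ms v H um > 0" for um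
    proof -
      have wle: "(\<Sum>j<m. w um (us um ! j)) \<le> 1" using PP_le[of "w um" "us um" m] good[OF um] len_us by auto
      have wsum: "(\<Sum>j<m. ennreal (w um (us um ! j))) = ennreal (\<Sum>j<m. w um (us um ! j))"
        using wnn by (intro sum_ennreal) auto
      have "(\<Sum>j<m. ennreal (w um (us um ! j)) * Gc um j) + ennreal (1 - (\<Sum>j<m. w um (us um ! j))) * of_nat d
         = (ennreal (\<Sum>j<m. w um (us um ! j)) + ennreal (1 - (\<Sum>j<m. w um (us um ! j)))) * of_nat d
           + (\<Sum>j<m. ennreal (w um (us um ! j)) * g um j)"
        unfolding wsum[symmetric] Gcg by (simp only: distrib_left sum.distrib sum_distrib_right[symmetric] distrib_right add_ac)
      also have "ennreal (\<Sum>j<m. w um (us um ! j)) + ennreal (1 - (\<Sum>j<m. w um (us um ! j))) = 1"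
        using wle wnn by (subst ennreal_plus[symmetric]) (auto intro!: sum_nonneg)
      finally show ?thesis by simp
    qed
    have lowU: "(\<Sum>um\<in>UNIV. ennreal (msneg Ms v H um) * (ennreal (\<Sum>u\<in>UNIV. P um u) * of_nat d
        + (\<Sum>j<m. ennreal (P um (us um ! j)) * g um j))) \<le> dep (Ub Mb Ms topk p v d (Sh cs))"
      unfolding depU
    proof (intro sum_mono)
      fix um show "ennreal (msneg Ms v H um) * (ennreal (\<Sum>u\<in>UNIV. P um u) * of_nat d
        + (\<Sum>j<m. ennreal (P um (us um ! j)) * g um j)) \<le> dep (T um) * ennreal (msneg Ms v H um)"
      proof (cases "msneg Ms v H um > 0")
        case True
        have "ennreal (msneg Ms v H um) * (ennreal (\<Sum>u\<in>UNIV. P um u) * of_nat d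
          + (\<Sum>j<m. ennreal (P um (us um ! j)) * g um j)) \<le> ennreal (msneg Ms v H um) * dep (T um)"
          using lowT[OF True] by (rule mult_left_mono) simp
        then show ?thesis by (simp only: mult.commute)
      next
        case False then have "msneg Ms v H um = 0" using mn0[of um] by simp
        then show ?thesis by simp
      qed
    qed
    have first: "(\<Sum>um\<in>UNIV. ennreal (msneg Ms v H um) * (ennreal (\<Sum>u\<in>UNIV. P um u) * of_nat d)) = ennreal p * of_nat d"
      using sum_ennreal_const[where a="msneg Ms v H" and f="\<lambda>um. \<Sum>u\<in>UNIV. P um u" and A=UNIV and c="of_nat d", OF mn0]
      unfolding P_def pv_avg[OF HU Sh.prems(2,3)]
      using Pnn unfolding P_def by (auto intro: sum_nonneg)
    have GR: "gd (Gb Mb Ms topk v d (Sh cs)) = of_nat d + (\<Sum>j<m. \<Sum>um\<in>UNIV. ennreal (msneg Ms v H um) * (ennreal (w um (us um ! j)) * g um j))"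
    proof -
      have "gd (Gb Mb Ms topk v d (Sh cs)) = (\<Sum>um\<in>UNIV. ennreal (msneg Ms v H um) * (of_nat d + (\<Sum>j<m. ennreal (w um (us um ! j)) * g um j)))"
        unfolding Geq
      proof (intro sum.cong refl)
        fix um show "ennreal (msneg Ms v H um) * ((\<Sum>j<m. ennreal (w um (us um ! j)) * Gc um j) + ennreal (1 - (\<Sum>j<m. w um (us um ! j))) * of_nat d)
          = ennreal (msneg Ms v H um) * (of_nat d + (\<Sum>j<m. ennreal (w um (us um ! j)) * g um j))"
        proof (cases "msneg Ms v H um > 0")
          case True then show ?thesis using innerR[OF True] by simp
        next
          case False then have "msneg Ms v H um = 0" using mn0[of um] by simp
          then show ?thesis by simp
        qed
      qed
      also have "\<dots> = (\<Sum>um\<in>UNIV. ennreal (msneg Ms v H um) * of_nat d) + (\<Sum>j<m. \<Sum>um\<in>UNIV. ennreal (msneg Ms v H um) * (ennreal (w um (us um ! j)) * g um j))"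
        by (rule sum_split_ennreal)
      also have "(\<Sum>um\<in>UNIV. ennreal (msneg Ms v H um) * of_nat d) = of_nat d"
      proof -
        have "(\<Sum>um\<in>UNIV. ennreal (msneg Ms v H um)) = ennreal (\<Sum>um\<in>UNIV. msneg Ms v H um)"
          using mn0 by (intro sum_ennreal) auto
        then show ?thesis by (simp add: sum_distrib_right[symmetric] mn_sum[OF HU])
      qed
      finally show ?thesis .
    qed
    have perj: "ennreal p * (\<Sum>um\<in>UNIV. ennreal (msneg Ms v H um) * (ennreal (w um (us um ! j)) * g um j))
       \<le> (\<Sum>um\<in>UNIV. ennreal (msneg Ms v H um) * (ennreal (P um (us um ! j)) * g um j))" if j: "j < m" for j
    proof (cases "j < m - 1")
      case True
      define h where "h = hs ! j"
      have hH: "h \<in> H" unfolding h_def H_def using True top(1) by simp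
      have ush: "us um ! j = h" for um unfolding us_def h_def using True top(1) by (simp add: nth_append)
      define c where "c = gd (Gb Mb Ms topk (v @ [h]) (Suc d) (cs!j)) - of_nat d"
      have gc: "g um j = c" for um unfolding g_def Gc_def c_def ush ..
      have "ennreal p * (\<Sum>um\<in>UNIV. ennreal (msneg Ms v H um) * (ennreal (w um (us um ! j)) * g um j))
         = ennreal p * (ennreal (\<Sum>um\<in>UNIV. msneg Ms v H um * w um h) * c)"
        unfolding ush gc using sum_ennreal_const[where a="msneg Ms v H" and f="\<lambda>um. w um h" and A=UNIV and c=c, OF mn0 wnn] by simp
      also have "\<dots> = ennreal (p * pmf (Mb v) h) * c"
        unfolding w_def pv_avgH[OF HU _ _ hH, where p=1, simplified] using Sh.prems by (simp add: ennreal_mult' mult.assoc)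
      also have "\<dots> = (\<Sum>um\<in>UNIV. ennreal (msneg Ms v H um) * (ennreal (P um (us um ! j)) * g um j))"
        unfolding ush gc using sum_ennreal_const[where a="msneg Ms v H" and f="\<lambda>um. P um h" and A=UNIV and c=c, OF mn0 Pnn]
        unfolding P_def pv_avgH[OF HU Sh.prems(2,3) hH] by simp
      finally show ?thesis by simp
    next
      case False
      then have jm: "j = m - 1" using j by simp
      have ush: "us um ! j = um" for um unfolding us_def jm using top(1) by (simp add: nth_append)
      show ?thesis unfolding ush sum_distrib_left
      proof (intro sum_mono)
        fix um show "ennreal p * (ennreal (msneg Ms v H um) * (ennreal (w um um) * g um j))
          \<le> ennreal (msneg Ms v H um) * (ennreal (P um um) * g um j)"
        proof (cases "msneg Ms v H um > 0")
          case True
          have "p * w um um \<le> P um um"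
            using pv_um[where Mb=Mb and Ms=Ms and v=v and H=H, OF HU Sh.prems(2,3) True] unfolding P_def w_def .
          then have "ennreal (p * w um um) \<le> ennreal (P um um)" by (rule ennreal_leI)
          then have "ennreal p * ennreal (w um um) \<le> ennreal (P um um)"
            using Sh.prems by (simp add: ennreal_mult')
          then have "ennreal p * ennreal (w um um) * g um j \<le> ennreal (P um um) * g um j"
            by (rule mult_right_mono) simp
          then have "ennreal (msneg Ms v H um) * (ennreal p * ennreal (w um um) * g um j) \<le> ennreal (msneg Ms v H um) * (ennreal (P um um) * g um j)"
            by (rule mult_left_mono) simp
          then show ?thesis by (simp only: mult_ac)
        next
          case False then have "msneg Ms v H um = 0" using mn0[of um] by simp
          then show ?thesis by simp
        qed
      qed
    qed
    have pb: "ennreal p * gd (Gb Mb Ms topk v d (Sh cs)) \<le> dep (Ub Mb Ms topk p v d (Sh cs))"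
    proof -
      have "ennreal p * gd (Gb Mb Ms topk v d (Sh cs)) = ennreal p * of_nat d
         + (\<Sum>j<m. ennreal p * (\<Sum>um\<in>UNIV. ennreal (msneg Ms v H um) * (ennreal (w um (us um ! j)) * g um j)))"
        unfolding GR by (simp add: distrib_left sum_distrib_left)
      also have "\<dots> \<le> ennreal p * of_nat d + (\<Sum>j<m. \<Sum>um\<in>UNIV. ennreal (msneg Ms v H um) * (ennreal (P um (us um ! j)) * g um j))"
        using perj by (intro add_mono sum_mono) auto
      also have "\<dots> = (\<Sum>um\<in>UNIV. ennreal (msneg Ms v H um) * (ennreal (\<Sum>u\<in>UNIV. P um u) * of_nat d
        + (\<Sum>j<m. ennreal (P um (us um ! j)) * g um j)))"
        unfolding sum_split_ennreal first ..
      also have "\<dots> \<le> dep (Ub Mb Ms topk p v d (Sh cs))" by (rule lowU)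
      finally show ?thesis .
    qed
    show ?thesis using pa pb pc unfolding K_def by simp
  qed
qed

end


theorem lemma1:
  fixes Mb Ms :: "'a::finite list \<Rightarrow> 'a pmf"
    and topk :: "'a list \<Rightarrow> nat \<Rightarrow> 'a list"
    and S :: shape
    and pr :: real
  assumes top_ok: "\<And>v k. k < CARD('a) \<Longrightarrow>
      length (topk v k) = k \<and> distinct (topk v k)
      \<and> sorted_wrt (\<lambda>x y. pmf (Ms v) y \<le> pmf (Ms v) x) (topk v k)
      \<and> (\<forall>x\<in>set (topk v k). \<forall>y. y \<notin> set (topk v k) \<longrightarrow> pmf (Ms v) y \<le> pmf (Ms v) x)"
    and shape: "shape_ok CARD('a) S"
    and pr: "0 \<le> pr" "pr \<le> 1"
  shows "measure_pmf.expectation (bind_pmf (sample_tree Ms topk [] S) (N_Mod Mb Ms pr)) real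
         \<ge> pr * measure_pmf.expectation (bind_pmf (sample_tree Ms topk [] S) (N_Greedy Mb Ms)) real"
proof -
  have M: "ennreal pr * gd (Gb Mb Ms topk [] 0 S) \<le> dep (Ub Mb Ms topk pr [] 0 S) \<and>
      dep (Ub Mb Ms topk pr [] 0 S) \<le> ennreal pr * of_nat (0 + size S)"
    using main[where Mb=Mb and Ms=Ms and topk=topk and v="[]" and d=0, OF top_ok shape pr] by blast
  have fin: "dep (Ub Mb Ms topk pr [] 0 S) < \<top>"
    using M by (meson ennreal_mult_less_top ennreal_less_top le_less_trans of_nat_less_top)
  have dd: "\<And>r. ennreal (real (case r of None \<Rightarrow> 0 | Some d \<Rightarrow> d)) = depo r"
    by (simp add: depo_def ennreal_of_nat_eq_real_of_nat split: option.split)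
  have L: "measure_pmf.expectation (bind_pmf (sample_tree Ms topk [] S) (N_Mod Mb Ms pr)) real
      = enn2real (dep (Ub Mb Ms topk pr [] 0 S))"
    by (subst integral_eq_nn_integral) (auto simp: N_Mod_def Ub_def dd)
  have R: "measure_pmf.expectation (bind_pmf (sample_tree Ms topk [] S) (N_Greedy Mb Ms)) real
      = enn2real (gd (Gb Mb Ms topk [] 0 S))"
    by (subst integral_eq_nn_integral) (auto simp: N_Greedy_def Gb_def ennreal_of_nat_eq_real_of_nat)
  have "pr * enn2real (gd (Gb Mb Ms topk [] 0 S)) = enn2real (ennreal pr * gd (Gb Mb Ms topk [] 0 S))"
    using pr by (simp add: enn2real_mult)
  also have "\<dots> \<le> enn2real (dep (Ub Mb Ms topk pr [] 0 S))"
    using M fin by (intro enn2real_mono) auto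
  finally show ?thesis unfolding L R .
qed


end
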